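(* Let $G=(V,\Sigma,R,S)$ be a context-free grammar in Greibach Normal Form. For all $t,u\in\Sigma^*$: if $D_G(t)=D_G(u)$, then $t\equiv_{L(G)}u$.
   Context: A context-free grammar $G=(V,\Sigma,R,S)$ in Greibach Normal Form has every production of the form $S\to\epsilon$ or $A\to a\,\beta$ with $a\in\Sigma$, $\beta\in(V\setminus\{S\})^*$; $L(G)$ is its language. Let $\delta_G(a,A)=\{\beta\in V^*:(A\to a\,\beta)\in R\}$. Define $\pi:\Sigma^*\times V^*\to\mathcal{P}(V^* )$ recursively by $\pi(t,\alpha)=\{\alpha\}$ if $t=\epsilon$; $\pi(t,\alpha)=\emptyset$ if $t\neq\epsilon$ and $\alpha=\epsilon$; and otherwise $\pi(t,\alpha)=\bigcup_{\beta\in\delta_G(t_0,\alpha_0)}\pi(t_{1:},\beta\alpha_{1:})$, where $t_0$ is the first character of $t$, $t_{1:}$ the rest of $t$, $\alpha_0$ the first symbol of $\alpha$ and $\alpha_{1:}$ the rest of $\alpha$. The pre-displacement of $t\in\Sigma^*$ is $D_G(t)=\{(\alpha,\beta):\alpha\in V^*,\ \beta\in\pi(t,\alpha)\}$. Syntactic congruence: $t\equiv_{L(G)}u$ iff for all $w,z\in\Sigma^*$, $wtz\in L(G)\leftrightarrow wuz\in L(G)$. *)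

theory Defs
  imports Main
begin

text \<open>Symbols of a context-free grammar: nonterminals of type 'n (the set V = UNIV),
terminals of type 't (the alphabet Sigma = UNIV).\<close>
datatype ('n, 't) sym = Nt 'n | Tm 't

type_synonym ('n, 't) prods = "('n \<times> ('n, 't) sym list) set"

definition derive1 :: "('n, 't) prods \<Rightarrow> ('n, 't) sym list \<Rightarrow> ('n, 't) sym list \<Rightarrow> bool" where
  "derive1 R u v \<longleftrightarrow> (\<exists>l A r rhs. (A, rhs) \<in> R \<and> u = l @ Nt A # r \<and> v = l @ rhs @ r)"

definition Lang :: "('n, 't) prods \<Rightarrow> 'n \<Rightarrow> 't list set" where
  "Lang R S = {w. (derive1 R)\<^sup>*\<^sup>* [Nt S] (map Tm w)}"

definition GNF :: "('n, 't) prods \<Rightarrow> 'n \<Rightarrow> bool" where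
  "GNF R S \<longleftrightarrow> (\<forall>(A, rhs) \<in> R. (A = S \<and> rhs = []) \<or>
      (\<exists>a \<beta>. rhs = Tm a # map Nt \<beta> \<and> S \<notin> set \<beta>))"

definition delta :: "('n, 't) prods \<Rightarrow> 't \<Rightarrow> 'n \<Rightarrow> 'n list set" where
  "delta R a A = {\<beta>. (A, Tm a # map Nt \<beta>) \<in> R}"

fun pi :: "('n, 't) prods \<Rightarrow> 't list \<Rightarrow> 'n list \<Rightarrow> 'n list set" where
  "pi R [] \<alpha> = {\<alpha>}"
| "pi R (a # t) [] = {}"
| "pi R (a # t) (A # \<alpha>) = (\<Union>\<beta> \<in> delta R a A. pi R t (\<beta> @ \<alpha>))"

definition predisp :: "('n, 't) prods \<Rightarrow> 't list \<Rightarrow> ('n list \<times> 'n list) set" where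
  "predisp R t = {(\<alpha>, \<beta>). \<beta> \<in> pi R t \<alpha>}"

definition syn_cong :: "'t list set \<Rightarrow> 't list \<Rightarrow> 't list \<Rightarrow> bool" where
  "syn_cong L t u \<longleftrightarrow> (\<forall>w z. w @ t @ z \<in> L \<longleftrightarrow> w @ u @ z \<in> L)"

end

theory Submission
  imports Defs
begin

fun acc :: "('n, 't) prods \<Rightarrow> 't list \<Rightarrow> ('n, 't) sym list \<Rightarrow> bool" where
  "acc R [] x = (x = [])"
| "acc R (a # w) [] = False"
| "acc R (a # w) (Tm b # x) = (a = b \<and> acc R w x)"
| "acc R (a # w) (Nt A # x) = (\<exists>\<beta>\<in>delta R a A. acc R w (map Nt \<beta> @ x))"

lemma acc_step:
  assumes "(A, Tm a # map Nt \<beta>) \<in> R"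
  shows "acc R w (l @ Tm a # map Nt \<beta> @ r) \<Longrightarrow> acc R w (l @ Nt A # r)"
proof (induction w arbitrary: l)
  case Nil
  then show ?case by simp
next
  case (Cons c w')
  show ?case
  proof (cases l)
    case Nil
    then show ?thesis using Cons.prems assms by (auto simp: delta_def)
  next
    case (Cons s l')
    show ?thesis
    proof (cases s)
      case (Nt B)
      then obtain \<beta>' where b: "\<beta>' \<in> delta R c B"
        "acc R w' (map Nt \<beta>' @ l' @ Tm a # map Nt \<beta> @ r)"
        using Cons.prems \<open>l = s # l'\<close> Nt by auto
      then have "acc R w' ((map Nt \<beta>' @ l') @ Nt A # r)"
        using Cons.IH[of "map Nt \<beta>' @ l'"] by simp
      then show ?thesis using b(1) Nt \<open>l = s # l'\<close> by auto
    next
      case (Tm b)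
      then show ?thesis using Cons.prems Cons.IH[of l'] \<open>l = s # l'\<close> by auto
    qed
  qed
qed

lemma derive1_prefix: "derive1 R x y \<Longrightarrow> derive1 R (p @ x) (p @ y)"
  unfolding derive1_def by (metis append.assoc)

lemma derives_prefix: "(derive1 R)\<^sup>*\<^sup>* x y \<Longrightarrow> (derive1 R)\<^sup>*\<^sup>* (p @ x) (p @ y)"
  by (induction rule: rtranclp_induct) (auto intro: rtranclp.rtrancl_into_rtrancl derive1_prefix)

lemma acc_derives: "acc R w x \<Longrightarrow> (derive1 R)\<^sup>*\<^sup>* x (map Tm w)"
proof (induction w arbitrary: x)
  case Nil
  then show ?case by simp
next
  case (Cons a w')
  show ?case
  proof (cases x)
    case Nil
    then show ?thesis using Cons.prems by simp
  next
    case (Cons s x')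
    show ?thesis
    proof (cases s)
      case (Nt A)
      then obtain \<beta> where b: "(A, Tm a # map Nt \<beta>) \<in> R" "acc R w' (map Nt \<beta> @ x')"
        using Cons.prems \<open>x = s # x'\<close> by (auto simp: delta_def)
      have d1: "derive1 R (Nt A # x') (Tm a # map Nt \<beta> @ x')"
        unfolding derive1_def using b(1) by (metis append_Cons append_Nil)
      have "(derive1 R)\<^sup>*\<^sup>* ([Tm a] @ (map Nt \<beta> @ x')) ([Tm a] @ map Tm w')"
        using derives_prefix Cons.IH b(2) by blast
      then show ?thesis using d1 Nt \<open>x = s # x'\<close>
        by (auto intro: converse_rtranclp_into_rtranclp)
    next
      case (Tm b)
      then have "(derive1 R)\<^sup>*\<^sup>* ([Tm a] @ x') ([Tm a] @ map Tm w')"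
      proof -
        have "acc R w' x'" using Cons.prems \<open>x = s # x'\<close> Tm by simp
        then show ?thesis using derives_prefix Cons.IH by blast
      qed
      then show ?thesis using Tm Cons.prems \<open>x = s # x'\<close> by auto
    qed
  qed
qed

lemma GNF_D: "GNF R S \<Longrightarrow> (A, rhs) \<in> R \<Longrightarrow>
  (A = S \<and> rhs = []) \<or> (\<exists>a \<beta>. rhs = Tm a # map Nt \<beta> \<and> S \<notin> set \<beta>)"
  unfolding GNF_def by (drule (1) bspec) simp

lemma derives_acc:
  assumes g: "GNF R S"
  shows "(derive1 R)\<^sup>*\<^sup>* x y \<Longrightarrow> y = map Tm w \<Longrightarrow> Nt S \<notin> set x \<Longrightarrow> acc R w x"
proof (induction rule: converse_rtranclp_induct)
  case base
  have "acc R w (map Tm w)" by (induction w) auto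
  then show ?case using base by simp
next
  case (step x y')
  from step.hyps(1) obtain l A r rhs where p: "(A, rhs) \<in> R" "x = l @ Nt A # r" "y' = l @ rhs @ r"
    unfolding derive1_def by blast
  have "A \<noteq> S" using p step.prems by auto
  then obtain a \<beta> where rhs: "rhs = Tm a # map Nt \<beta>" "S \<notin> set \<beta>"
    using GNF_D[OF g p(1)] by blast
  have "Nt S \<notin> set y'" using p rhs step.prems by auto
  then have "acc R w y'" using step.IH step.prems by simp
  then show ?case using acc_step[of A a \<beta> R w l r] p rhs by simp
qed

lemma acc_pi: "acc R w (map Nt \<alpha>) \<longleftrightarrow> [] \<in> pi R w \<alpha>"
proof (induction w arbitrary: \<alpha>)
  case Nil
  then show ?case by auto
next
  case (Cons a w)
  then show ?case by (cases \<alpha>) (auto simp flip: map_append)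
qed

lemma pi_append: "pi R (w @ t) \<alpha> = (\<Union>\<gamma> \<in> pi R w \<alpha>. pi R t \<gamma>)"
proof (induction w arbitrary: \<alpha>)
  case Nil
  then show ?case by simp
next
  case (Cons a w)
  then show ?case by (cases \<alpha>) auto
qed

lemma derives_Nil: "(derive1 R)\<^sup>*\<^sup>* [] v \<Longrightarrow> v = []"
  by (induction rule: rtranclp_induct) (auto simp: derive1_def)

lemma derive1_single:
  assumes "derive1 R [Nt S] y" shows "(S, y) \<in> R"
proof -
  from assms obtain l A r rhs where p: "(A, rhs) \<in> R" "[Nt S] = l @ Nt A # r" "y = l @ rhs @ r"
    unfolding derive1_def by blast
  have l: "l = []" using p(2) by (cases l) auto
  then have "r = [] \<and> A = S" using p(2) by simp
  then show ?thesis using p(1) p(3) l by simp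
qed

lemma Lang_nonempty:
  assumes g: "GNF R S" and w: "w \<noteq> []"
  shows "w \<in> Lang R S \<longleftrightarrow> [] \<in> pi R w [S]"
proof
  assume "w \<in> Lang R S"
  then have d: "(derive1 R)\<^sup>*\<^sup>* [Nt S] (map Tm w)" unfolding Lang_def by simp
  have "acc R w [Nt S]"
  proof (rule converse_rtranclpE[OF d])
    assume "[Nt S] = map Tm w"
    then show ?thesis by (cases w) auto
  next
    fix y assume y1: "derive1 R [Nt S] y" and y2: "(derive1 R)\<^sup>*\<^sup>* y (map Tm w)"
    have SR: "(S, y) \<in> R" using derive1_single[OF y1] .
    have "(S = S \<and> y = []) \<or> (\<exists>a \<beta>. y = Tm a # map Nt \<beta> \<and> S \<notin> set \<beta>)"
      using GNF_D[OF g SR] .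
    moreover have "y \<noteq> []"
    proof
      assume "y = []"
      then have "(derive1 R)\<^sup>*\<^sup>* [] (map Tm w)" using y2 by simp
      then have "map Tm w = []" using derives_Nil[of R "map Tm w"] by simp
      then show False using w by simp
    qed
    ultimately obtain a \<beta> where rhs: "y = Tm a # map Nt \<beta>" "S \<notin> set \<beta>" by blast
    have ny: "Nt S \<notin> set y" using rhs by auto
    have "acc R w y" using derives_acc[OF g y2 refl ny] .
    then have "acc R w ([] @ Tm a # map Nt \<beta> @ [])" using rhs by simp
    then have "acc R w ([] @ Nt S # [])" using acc_step[of S a \<beta> R w "[]" "[]"] SR rhs by blast
    then show ?thesis by simp
  qed
  then show "[] \<in> pi R w [S]" using acc_pi[of R w "[S]"] by simp
next
  assume "[] \<in> pi R w [S]"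
  then have "acc R w [Nt S]" using acc_pi[of R w "[S]"] by simp
  then have "(derive1 R)\<^sup>*\<^sup>* [Nt S] (map Tm w)" using acc_derives by metis
  then show "w \<in> Lang R S" unfolding Lang_def by simp
qed

theorem lemma3:
  fixes R :: "('n, 't) prods" and S :: 'n and t u :: "'t list"
  assumes "finite R" and "GNF R S"
    and "predisp R t = predisp R u"
  shows "syn_cong (Lang R S) t u"
proof -
  have pt: "\<And>\<alpha> \<beta>. \<beta> \<in> pi R t \<alpha> \<longleftrightarrow> \<beta> \<in> pi R u \<alpha>"
    using assms(3) unfolding predisp_def by (metis (no_types, lifting) case_prodI mem_Collect_eq old.prod.case)
  have ne: "t = [] \<longleftrightarrow> u = []"
  proof -
    have "\<And>v. v = [] \<longleftrightarrow> [] \<in> pi R v []" by (case_tac v) auto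
    then show ?thesis using pt by blast
  qed
  show ?thesis
  proof (cases "t = []")
    case True
    then show ?thesis using ne unfolding syn_cong_def by simp
  next
    case False
    have "w @ t @ z \<in> Lang R S \<longleftrightarrow> w @ u @ z \<in> Lang R S" for w z
    proof -
      have "w @ t @ z \<in> Lang R S \<longleftrightarrow> [] \<in> pi R (w @ t @ z) [S]"
        using Lang_nonempty[OF assms(2)] False by simp
      also have "\<dots> \<longleftrightarrow> [] \<in> pi R (w @ u @ z) [S]"
        unfolding pi_append using pt by blast
      also have "\<dots> \<longleftrightarrow> w @ u @ z \<in> Lang R S"
        using Lang_nonempty[OF assms(2)] False ne by simp
      finally show ?thesis .
    qed
    then show ?thesis unfolding syn_cong_def by blast
  qed
qed

end
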